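(* $\mathcal{R}(\mathtt{KB})>1.4334$: there exist MWSBP instances (with $w_i=s_i$ for all items) and corresponding outputs of the Knapsack-Batching algorithm whose cost exceeds $1.4334\cdot\mathtt{OPT}$.
   Context: Min-Weighted Sum Bin Packing (MWSBP): an instance consists of $n$ items with sizes $s_i\in(0,1]$ and weights $w_i>0$. A feasible solution is a partition of the items into bins $B_1,\ldots,B_p$ with $\sum_{i\in B_k}s_i\le 1$; its cost is $\sum_{k=1}^p k\sum_{i\in B_k}w_i$; $\mathtt{OPT}$ is the minimum cost. The Knapsack-Batching algorithm ($\mathtt{KB}$): for $k=1,2,\ldots$ while items remain, let $B_k$ be a subset of the remaining items of maximum total weight subject to total size at most $1$ (ties broken arbitrarily). The approximation ratio $\mathcal{R}(\mathtt{ALG})$ is the smallest $\rho\ge1$ such that on every instance (and for every way the algorithm may break ties) the cost of its output is at most $\rho\cdot\mathtt{OPT}$. *)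

theory Defs
  imports Main "HOL-Library.Multiset" Complex_Main
begin

text \<open>Items are natural numbers from a finite set I; s = sizes, w = weights.
  A solution is a list of bins (bin k+1 is the k-th list entry, 0-based).\<close>

definition mwsbp_instance :: "nat set \<Rightarrow> (nat \<Rightarrow> real) \<Rightarrow> (nat \<Rightarrow> real) \<Rightarrow> bool" where
  "mwsbp_instance I s w \<longleftrightarrow> finite I \<and> (\<forall>i\<in>I. 0 < s i \<and> s i \<le> 1 \<and> 0 < w i)"

definition feasible :: "nat set \<Rightarrow> (nat \<Rightarrow> real) \<Rightarrow> nat set list \<Rightarrow> bool" where
  "feasible I s Bs \<longleftrightarrow>
     (\<Union>(set Bs) = I) \<and>
     (\<forall>k<length Bs. Bs ! k \<noteq> {} \<and> Bs ! k \<subseteq> I \<and> sum s (Bs ! k) \<le> 1) \<and>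
     (\<forall>j<length Bs. \<forall>k<length Bs. j \<noteq> k \<longrightarrow> Bs ! j \<inter> Bs ! k = {})"

definition cost :: "(nat \<Rightarrow> real) \<Rightarrow> nat set list \<Rightarrow> real" where
  "cost w Bs = (\<Sum>k<length Bs. real (k + 1) * sum w (Bs ! k))"

definition OPT :: "nat set \<Rightarrow> (nat \<Rightarrow> real) \<Rightarrow> (nat \<Rightarrow> real) \<Rightarrow> real" where
  "OPT I s w = Inf {cost w Bs | Bs. feasible I s Bs}"

text \<open>Bs is a possible output of Knapsack-Batching (with some tie-breaking):
  while items remain, the next bin is a maximum-weight subset of the remaining
  items of total size at most 1; the run stops when all items are packed.\<close>

definition KB_output :: "nat set \<Rightarrow> (nat \<Rightarrow> real) \<Rightarrow> (nat \<Rightarrow> real) \<Rightarrow> nat set list \<Rightarrow> bool" where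
  "KB_output I s w Bs \<longleftrightarrow>
     (\<Union>(set Bs) = I) \<and>
     (\<forall>k<length Bs.
        (let R = I - \<Union>(set (take k Bs)) in
           R \<noteq> {} \<and> Bs ! k \<subseteq> R \<and> sum s (Bs ! k) \<le> 1 \<and>
           (\<forall>B. B \<subseteq> R \<and> sum s B \<le> 1 \<longrightarrow> sum w B \<le> sum w (Bs ! k))))"

end

theory Submission
  imports Defs
begin


definition NL :: "nat list" where "NL = [0, 1611020, 1236387, 1088276, 1021800, 990233, 974862, 967232, 963390, 961191, 960597, 960043, 958230, 958347, 950214, 950243, 917490, 917497, 786429]"
definition BL :: "nat list" where "BL = [2309299, 698279, 286150, 130682, 62562, 30619, 15145, 7529, 3751, 1870, 931, 462, 228, 111, 53, 24, 10, 3, 0]"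
definition Nc :: "nat \<Rightarrow> nat" where "Nc i = NL ! i"
definition Bst :: "nat \<Rightarrow> nat" where "Bst i = BL ! i"
definition qq :: "nat \<Rightarrow> nat" where "qq i = 2^i - 1"
definition gg :: "nat \<Rightarrow> nat" where "gg i = 2^(19 - i)"
definition nbc :: "nat \<Rightarrow> nat" where "nbc i = Nc i div qq i"

lemma all18: "(\<forall>i\<in>{1..18::nat}. P i) \<longleftrightarrow> P 1 \<and> P 2 \<and> P 3 \<and> P 4 \<and> P 5 \<and> P 6 \<and> P 7 \<and> P 8 \<and> P 9 \<and> P 10 \<and> P 11 \<and> P 12 \<and> P 13 \<and> P 14 \<and> P 15 \<and> P 16 \<and> P 17 \<and> P 18"
  by (simp add: atLeastAtMost_upt upt_rec numeral_eq_Suc)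

lemma S18: "(\<Sum>i\<in>{1..18::nat}. f i) = f 1 + f 2 + f 3 + f 4 + f 5 + f 6 + f 7 + f 8 + f 9 + f 10 + f 11 + f 12 + f 13 + f 14 + f 15 + f 16 + f 17 + (f 18 :: 'a::comm_monoid_add)"
  by (simp add: sum.atLeast_Suc_atMost numeral_eq_Suc add.assoc)

lemma facts: "\<forall>i\<in>{1..18::nat}. Nc i = nbc i * qq i \<and> Bst (i - 1) = Bst i + nbc i \<and> Nc i \<le> Nc 1
   \<and> 0 < nbc i \<and> gg i * qq i \<le> 524286 \<and> gg i * 2^i = 524288"
  unfolding all18 by (simp add: Nc_def NL_def qq_def nbc_def Bst_def BL_def gg_def)

lemma Bst18: "Bst 18 = 0" by (simp add: Bst_def BL_def)

lemma fct:
  assumes "1 \<le> i" "i \<le> 18"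
  shows "Nc i = nbc i * qq i" "Bst (i - 1) = Bst i + nbc i" "Nc i \<le> Nc 1"
        "0 < nbc i" "gg i * qq i \<le> 524286" "gg i * 2^i = 524288"
proof -
  have "i \<in> {1..18}" using assms by simp
  note H = bspec[OF facts this]
  show "Nc i = nbc i * qq i" "Bst (i - 1) = Bst i + nbc i" "Nc i \<le> Nc 1"
        "0 < nbc i" "gg i * qq i \<le> 524286" "gg i * 2^i = 524288"
    using H by blast+
qed

lemma qq_pos: assumes "1 \<le> i" shows "0 < qq i"
proof -
  have "1 < (2::nat)^i" using one_less_power[of "2::nat" i] assms by simp
  then show ?thesis unfolding qq_def by simp
qed

lemma Bst_mono_aux: "i + d \<le> 18 \<Longrightarrow> Bst (i + d) \<le> Bst i"
proof (induction d)
  case 0 then show ?case by simp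
next
  case (Suc d)
  have "Bst (i + d) = Bst (i + Suc d) + nbc (i + Suc d)"
    using fct(2)[of "i + Suc d"] Suc.prems by simp
  then show ?case using Suc by simp
qed

lemma Bst_mono: "i \<le> j \<Longrightarrow> j \<le> 18 \<Longrightarrow> Bst j \<le> Bst i"
  using Bst_mono_aux[of i "j - i"] by simp

lemma Bst_step_le: "i < j \<Longrightarrow> j \<le> 18 \<Longrightarrow> Bst j + nbc j \<le> Bst i"
  using fct(2)[of j] Bst_mono[of i "j - 1"] by simp

lemma phase_aux: "d \<le> 18 \<Longrightarrow> k < Bst (18 - d) \<Longrightarrow> \<exists>i. 1 \<le> i \<and> i \<le> 18 \<and> Bst i \<le> k \<and> k < Bst i + nbc i"
proof (induction d)
  case 0 then show ?case using Bst18 by simp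
next
  case (Suc d)
  show ?case
  proof (cases "k < Bst (18 - d)")
    case True then show ?thesis using Suc by simp
  next
    case False
    have "Bst (18 - Suc d) = Bst (18 - d) + nbc (18 - d)"
      using fct(2)[of "18 - d"] Suc.prems by (simp add: Suc_diff_Suc)
    then show ?thesis using False Suc.prems by (intro exI[of _ "18 - d"]) auto
  qed
qed

lemma phase: "k < Bst 0 \<Longrightarrow> \<exists>i. 1 \<le> i \<and> i \<le> 18 \<and> Bst i \<le> k \<and> k < Bst i + nbc i"
  using phase_aux[of 18 k] by simp



definition II :: "nat set" where
  "II = {x. 1 \<le> x mod 32 \<and> x mod 32 \<le> 18 \<and> x div 32 < Nc (x mod 32)}"
definition ss :: "nat \<Rightarrow> real" where "ss x = real (gg (x mod 32)) / 524286"
definition kbb :: "nat \<Rightarrow> nat" where "kbb x = Bst (x mod 32) + (x div 32) div qq (x mod 32)"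
definition KBs :: "nat set list" where "KBs = map (\<lambda>k. {x\<in>II. kbb x = k}) [0..<Bst 0]"
definition OPs :: "nat set list" where "OPs = map (\<lambda>t. {x\<in>II. x div 32 = t}) [0..<Nc 1]"

lemma II_fin: "finite II"
proof -
  have "II \<subseteq> {..< 32 * (Nc 1 + 1)}"
  proof
    fix x assume "x \<in> II"
    then have "x div 32 < Nc 1" using fct(3)[of "x mod 32"] unfolding II_def by auto
    then show "x \<in> {..< 32 * (Nc 1 + 1)}" by auto
  qed
  then show ?thesis using finite_subset by blast
qed

lemma cost_fiber:
  fixes f :: "nat \<Rightarrow> nat" and w :: "nat \<Rightarrow> real"
  assumes fin: "finite A" and lt: "\<forall>x\<in>A. f x < L"
  shows "cost w (map (\<lambda>k. {x\<in>A. f x = k}) [0..<L]) = (\<Sum>x\<in>A. real (f x + 1) * w x)"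
proof -
  have "cost w (map (\<lambda>k. {x\<in>A. f x = k}) [0..<L]) = (\<Sum>k<L. real (k+1) * sum w {x\<in>A. f x = k})"
    unfolding cost_def by simp
  also have "\<dots> = (\<Sum>k\<in>{..<L}. \<Sum>x\<in>{x\<in>A. f x = k}. real (f x + 1) * w x)"
    by (rule sum.cong) (auto simp: sum_distrib_left)
  also have "\<dots> = (\<Sum>x\<in>A. real (f x + 1) * w x)"
    by (rule sum.group) (use fin lt in auto)
  finally show ?thesis .
qed

lemma union_fiber:
  assumes "\<forall>x\<in>A. f x < L" "k \<le> L"
  shows "\<Union>(set (take k (map (\<lambda>k. {x\<in>A. f x = k}) [0..<L]))) = {x\<in>A. (f x::nat) < k}"
  using assms by (auto simp: take_map)

lemma kbb_lt: assumes "x \<in> II" shows "kbb x < Bst (x mod 32) + nbc (x mod 32)" "Bst (x mod 32) \<le> kbb x"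
proof -
  let ?c = "x mod 32"
  have c: "1 \<le> ?c" "?c \<le> 18" "x div 32 < Nc ?c" using assms unfolding II_def by auto
  have "x div 32 < nbc ?c * qq ?c" using c fct(1)[of ?c] by simp
  then have "x div 32 div qq ?c < nbc ?c" by (simp add: less_mult_imp_div_less)
  then show "kbb x < Bst ?c + nbc ?c" unfolding kbb_def by simp
  show "Bst ?c \<le> kbb x" unfolding kbb_def by simp
qed

lemma kbb_L: "x \<in> II \<Longrightarrow> kbb x < Bst 0"
proof -
  assume x: "x \<in> II"
  let ?c = "x mod 32"
  have c: "1 \<le> ?c" "?c \<le> 18" using x unfolding II_def by auto
  show ?thesis using kbb_lt(1)[OF x] Bst_step_le[of 0 ?c] c by simp
qed

lemma bin_char:
  assumes i: "1 \<le> i" "i \<le> 18" "Bst i \<le> k" "k < Bst i + nbc i" and x: "x \<in> II"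
  shows "kbb x = k \<longleftrightarrow> x mod 32 = i \<and> x div 32 div qq i = k - Bst i"
    and "k \<le> kbb x \<Longrightarrow> x mod 32 \<le> i"
proof -
  let ?c = "x mod 32"
  have c: "1 \<le> ?c" "?c \<le> 18" using x unfolding II_def by auto
  have gt: "?c > i \<Longrightarrow> kbb x < k"
    using kbb_lt(1)[OF x] Bst_step_le[of i ?c] c i by simp
  have lt: "?c < i \<Longrightarrow> kbb x > k"
  proof -
    assume "?c < i"
    then have "Bst (i - 1) \<le> Bst ?c" using Bst_mono[of ?c "i - 1"] i by simp
    then show "kbb x > k" using kbb_lt(2)[OF x] fct(2)[of i] i by simp
  qed
  show "kbb x = k \<longleftrightarrow> ?c = i \<and> x div 32 div qq i = k - Bst i"
  proof
    assume "kbb x = k"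
    then have "?c = i" using gt lt by (meson linorder_neqE_nat order_less_irrefl)
    then show "?c = i \<and> x div 32 div qq i = k - Bst i" using \<open>kbb x = k\<close> unfolding kbb_def by auto
  next
    assume "?c = i \<and> x div 32 div qq i = k - Bst i"
    then show "kbb x = k" using i unfolding kbb_def by auto
  qed
  show "k \<le> kbb x \<Longrightarrow> ?c \<le> i" using gt by (meson leD not_le_imp_less)
qed



lemma ss_sum: "sum ss B = real (\<Sum>x\<in>B. gg (x mod 32)) / 524286"
  unfolding ss_def by (simp add: sum_divide_distrib)

lemma maxim:
  assumes i: "1 \<le> i" "i \<le> 18" and B: "\<forall>x\<in>B. 1 \<le> x mod 32 \<and> x mod 32 \<le> i"
    and le: "sum ss B \<le> 1"
  shows "sum ss B \<le> real (qq i * gg i) / 524286"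
proof -
  define t where "t = (\<Sum>x\<in>B. (2::nat) ^ (i - x mod 32))"
  have g: "gg (x mod 32) = gg i * 2 ^ (i - x mod 32)" if "x \<in> B" for x
  proof -
    have "19 - x mod 32 = (19 - i) + (i - x mod 32)" using B that i by auto
    then show ?thesis unfolding gg_def by (simp add: power_add)
  qed
  have eq: "(\<Sum>x\<in>B. gg (x mod 32)) = gg i * t"
    unfolding t_def sum_distrib_left using g by (rule sum.cong[OF refl])
  have "real (gg i * t) \<le> 524286" using le eq ss_sum[of B] by simp
  then have nt: "gg i * t \<le> 524286" by linarith
  have "t < 2 ^ i"
  proof (rule ccontr)
    assume "\<not> t < 2 ^ i"
    then have "gg i * 2^i \<le> gg i * t" by simp
    then show False using nt fct(6)[OF i] by simp
  qed
  then have "t \<le> qq i" unfolding qq_def by simp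
  then have "gg i * t \<le> qq i * gg i" by simp
  then have "real (gg i * t) \<le> real (qq i * gg i)" by linarith
  then show ?thesis using ss_sum[of B] eq by (simp add: divide_right_mono)
qed

lemma divr1: "0 < (q::nat) \<Longrightarrow> a div q = m \<Longrightarrow> m * q \<le> a \<and> a < m * q + q"
  by (metis div_times_less_eq_dividend add.commute dividend_less_div_times)
lemma divr2: "0 < (q::nat) \<Longrightarrow> m * q \<le> j \<Longrightarrow> j < m * q + q \<Longrightarrow> j div q = m"
  by (simp add: div_nat_eqI mult.commute)

lemma bin_img:
  assumes i: "1 \<le> i" "i \<le> 18" and m: "m < nbc i"
  shows "{x\<in>II. x mod 32 = i \<and> x div 32 div qq i = m} = (\<lambda>j. 32*j+i) ` {m * qq i ..< m * qq i + qq i}"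
proof -
  have q: "0 < qq i" using qq_pos i by simp
  have N: "m * qq i + qq i \<le> Nc i" using fct(1)[OF i] m
    by (metis add.commute mult_Suc mult_le_mono1 Suc_leI)
  show ?thesis
  proof (intro set_eqI iffI)
    fix x assume x: "x \<in> {x\<in>II. x mod 32 = i \<and> x div 32 div qq i = m}"
    then have "x = 32 * (x div 32) + i" using div_mult_mod_eq[of x 32] by (simp add: mult.commute)
    moreover have "x div 32 \<in> {m * qq i ..< m * qq i + qq i}"
      using x q divr1 by auto
    ultimately show "x \<in> (\<lambda>j. 32*j+i) ` {m * qq i ..< m * qq i + qq i}" by blast
  next
    fix x assume "x \<in> (\<lambda>j. 32*j+i) ` {m * qq i ..< m * qq i + qq i}"
    then obtain j where j: "x = 32*j+i" "m * qq i \<le> j" "j < m * qq i + qq i" by auto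
    have "x mod 32 = i" "x div 32 = j" using j(1) i by auto
    moreover have "j div qq i = m" using j q divr2 by blast
    ultimately show "x \<in> {x\<in>II. x mod 32 = i \<and> x div 32 div qq i = m}"
      using j N i unfolding II_def by auto
  qed
qed



lemma gs1: "(\<Sum>j<n. (j::nat)) * 2 = n * (n - 1)"
proof (induction n)
  case 0 then show ?case by simp
next
  case (Suc n) then show ?case by (cases n) (simp_all add: algebra_simps)
qed

lemma gs1': "(\<Sum>j<n. (j::nat)) = n * (n - 1) div 2"
  using gs1[of n] by simp

lemma gs2: "(\<Sum>j<n. (j::nat) + 1) = n * (n + 1) div 2"
proof -
  have "(\<Sum>j<n. (j::nat) + 1) = (\<Sum>j<n. j) + (\<Sum>j<n. 1)" by (rule sum.distrib)
  then have "(\<Sum>j<n. (j::nat) + 1) = (\<Sum>j<n. j) + n" by simp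
  also have "\<dots> * 2 = n * (n + 1)" using gs1[of n] by (cases n) (auto simp: algebra_simps)
  finally show ?thesis by simp
qed

lemma divsum: assumes q: "0 < (q::nat)" shows "(\<Sum>j<n*q. j div q) = q * (n * (n - 1) div 2)"
proof -
  have "(\<Sum>j<n*q. j div q) = (\<Sum>m<n. \<Sum>j\<in>{m*q..<m*q+q}. j div q)"
    by (rule sum.nat_group[symmetric])
  also have "\<dots> = (\<Sum>m<n. q * m)"
  proof (rule sum.cong[OF refl])
    fix m
    have "(\<Sum>j\<in>{m*q..<m*q+q}. j div q) = (\<Sum>j\<in>{m*q..<m*q+q}. m)"
      by (rule sum.cong[OF refl]) (use q divr2 in auto)
    then show "(\<Sum>j\<in>{m*q..<m*q+q}. j div q) = q * m" by simp
  qed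
  also have "\<dots> = q * (n * (n - 1) div 2)" by (simp add: sum_distrib_left[symmetric] gs1')
  finally show ?thesis .
qed

lemma sum_II: "(\<Sum>x\<in>II. h x) = (\<Sum>i\<in>{1..18}. \<Sum>j<Nc i. (h (32*j+i) :: 'a::comm_monoid_add))"
proof -
  have "(\<Sum>x\<in>II. h x) = (\<Sum>i\<in>{1..18}. \<Sum>x\<in>{x\<in>II. x mod 32 = i}. h x)"
    by (rule sum.group[symmetric]) (use II_fin in \<open>auto simp: II_def\<close>)
  also have "\<dots> = (\<Sum>i\<in>{1..18}. \<Sum>j<Nc i. h (32*j+i))"
  proof (rule sum.cong[OF refl])
    fix i :: nat assume i: "i \<in> {1..18}"
    have e: "{x\<in>II. x mod 32 = i} = (\<lambda>j. 32*j+i) ` {..<Nc i}"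
    proof (intro set_eqI iffI)
      fix x assume x: "x \<in> {x\<in>II. x mod 32 = i}"
      then have "x = 32 * (x div 32) + i" using div_mult_mod_eq[of x 32] by (simp add: mult.commute)
      moreover have "x div 32 < Nc i" using x unfolding II_def by auto
      ultimately show "x \<in> (\<lambda>j. 32*j+i) ` {..<Nc i}" by blast
    next
      fix x assume "x \<in> (\<lambda>j. 32*j+i) ` {..<Nc i}"
      then obtain j where "x = 32*j+i" "j < Nc i" by auto
      then show "x \<in> {x\<in>II. x mod 32 = i}" using i unfolding II_def by auto
    qed
    have inj: "inj_on (\<lambda>j. 32*j+i) {..<Nc i}" by (auto simp: inj_on_def)
    show "(\<Sum>x\<in>{x\<in>II. x mod 32 = i}. h x) = (\<Sum>j<Nc i. h (32*j+i))"
      unfolding e by (simp add: sum.reindex[OF inj])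
  qed
  finally show ?thesis .
qed

lemma mod_i: "i \<in> {1..18} \<Longrightarrow> (32*j+i) mod 32 = (i::nat)" by auto
lemma div_i: "i \<in> {1..18} \<Longrightarrow> (32*j+i) div 32 = (j::nat)" by auto

lemma kb_nat: "(\<Sum>x\<in>II. (kbb x + 1) * gg (x mod 32)) = 733943509150007224"
proof -
  have "(\<Sum>x\<in>II. (kbb x + 1) * gg (x mod 32)) =
     (\<Sum>i\<in>{1..18}. gg i * (Nc i * (Bst i + 1) + qq i * (nbc i * (nbc i - 1) div 2)))"
    unfolding sum_II
  proof (rule sum.cong[OF refl])
    fix i :: nat assume i: "i \<in> {1..18}"
    have "(\<Sum>j<Nc i. (kbb (32*j+i) + 1) * gg ((32*j+i) mod 32)) = (\<Sum>j<Nc i. ((Bst i + 1) + j div qq i) * gg i)"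
      by (rule sum.cong[OF refl]) (use i in \<open>simp add: kbb_def mod_i[OF i] div_i[OF i]\<close>)
    also have "\<dots> = (Nc i * (Bst i + 1) + (\<Sum>j<Nc i. j div qq i)) * gg i"
      by (simp add: sum_distrib_right[symmetric] sum_distrib_left[symmetric] sum.distrib algebra_simps)
    also have "(\<Sum>j<Nc i. j div qq i) = qq i * (nbc i * (nbc i - 1) div 2)"
      using fct(1)[of i] i divsum[OF qq_pos[of i]] by simp
    finally show "(\<Sum>j<Nc i. (kbb (32*j+i) + 1) * gg ((32*j+i) mod 32)) =
       gg i * (Nc i * (Bst i + 1) + qq i * (nbc i * (nbc i - 1) div 2))" by simp
  qed
  also have "\<dots> = 733943509150007224"
    unfolding S18 by (simp add: Nc_def NL_def qq_def nbc_def Bst_def BL_def gg_def)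
  finally show ?thesis .
qed

lemma op_nat: "(\<Sum>x\<in>II. (x div 32 + 1) * gg (x mod 32)) = 512013762924028466"
proof -
  have "(\<Sum>x\<in>II. (x div 32 + 1) * gg (x mod 32)) = (\<Sum>i\<in>{1..18}. gg i * (Nc i * (Nc i + 1) div 2))"
    unfolding sum_II
  proof (rule sum.cong[OF refl])
    fix i :: nat assume i: "i \<in> {1..18}"
    have "(\<Sum>j<Nc i. ((32*j+i) div 32 + 1) * gg ((32*j+i) mod 32)) = (\<Sum>j<Nc i. (j + 1) * gg i)"
      by (rule sum.cong[OF refl]) (use i in \<open>simp add: mod_i[OF i] div_i[OF i]\<close>)
    also have "\<dots> = (\<Sum>j<Nc i. j + 1) * gg i" by (rule sum_distrib_right[symmetric])
    also have "\<dots> = gg i * (Nc i * (Nc i + 1) div 2)" by (simp only: gs2 mult.commute)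
    finally show "(\<Sum>j<Nc i. ((32*j+i) div 32 + 1) * gg ((32*j+i) mod 32)) = gg i * (Nc i * (Nc i + 1) div 2)" .
  qed
  also have "\<dots> = 512013762924028466"
    unfolding S18 by (simp add: Nc_def NL_def gg_def)
  finally show ?thesis .
qed



lemma ss_nonneg: "0 \<le> ss x" unfolding ss_def by simp

lemma gg_bound: "1 \<le> c \<Longrightarrow> 0 < gg c \<and> gg c \<le> 524286"
proof -
  assume c: "1 \<le> c"
  have "gg c \<le> 2^18" unfolding gg_def using c by (intro power_increasing) auto
  then show ?thesis unfolding gg_def by simp
qed

lemma KB_bin:
  assumes kL: "k < Bst 0"
  shows "{x\<in>II. k \<le> kbb x} \<noteq> {} \<and> KBs ! k \<noteq> {} \<and> KBs ! k \<subseteq> {x\<in>II. k \<le> kbb x} \<and> sum ss (KBs ! k) \<le> 1 \<and>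
     (\<forall>B. B \<subseteq> {x\<in>II. k \<le> kbb x} \<and> sum ss B \<le> 1 \<longrightarrow> sum ss B \<le> sum ss (KBs ! k))"
proof -
  have bk: "KBs ! k = {x\<in>II. kbb x = k}" using kL by (simp add: KBs_def)
  obtain i where i: "1 \<le> i" "i \<le> 18" "Bst i \<le> k" "k < Bst i + nbc i" using phase[OF kL] by blast
  have m: "k - Bst i < nbc i" using i by simp
  have "{x\<in>II. kbb x = k} = {x\<in>II. x mod 32 = i \<and> x div 32 div qq i = k - Bst i}"
    using bin_char(1)[OF i] by blast
  then have bin: "KBs ! k = (\<lambda>j. 32*j+i) ` {(k - Bst i) * qq i ..< (k - Bst i) * qq i + qq i}"
    using bk bin_img[OF i(1,2) m] by simp
  have q: "0 < qq i" using qq_pos i by simp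
  have inj: "inj_on (\<lambda>j. 32*j+i) {(k - Bst i) * qq i ..< (k - Bst i) * qq i + qq i}"
    by (auto simp: inj_on_def)
  have ssi: "ss (32*j+i) = real (gg i) / 524286" for j
    unfolding ss_def using i by simp
  have sumbin: "sum ss (KBs ! k) = real (qq i * gg i) / 524286"
    unfolding bin sum.reindex[OF inj] by (simp add: ssi)
  have ne: "KBs ! k \<noteq> {}" unfolding bin using q by simp
  have sub: "KBs ! k \<subseteq> {x\<in>II. k \<le> kbb x}" using bk by auto
  have le1: "sum ss (KBs ! k) \<le> 1"
  proof -
    have "qq i * gg i \<le> 524286" using fct(5)[OF i(1,2)] by (simp add: mult.commute)
    then have "real (qq i * gg i) \<le> real (524286::nat)" by (simp only: of_nat_le_iff)
    then show ?thesis unfolding sumbin by simp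
  qed
  have mx: "sum ss B \<le> sum ss (KBs ! k)" if B: "B \<subseteq> {x\<in>II. k \<le> kbb x}" "sum ss B \<le> 1" for B
  proof -
    have "\<forall>x\<in>B. 1 \<le> x mod 32 \<and> x mod 32 \<le> i"
    proof
      fix x assume "x \<in> B"
      then have x: "x \<in> II" "k \<le> kbb x" using B by auto
      then show "1 \<le> x mod 32 \<and> x mod 32 \<le> i" using bin_char(2)[OF i x(1) x(2)] unfolding II_def by auto
    qed
    then show ?thesis unfolding sumbin using maxim[OF i(1,2) _ B(2)] by blast
  qed
  have "{x\<in>II. k \<le> kbb x} \<noteq> {}" using ne sub by blast
  then show ?thesis using ne sub le1 mx by blast
qed

lemma KB_ok: "KB_output II ss ss KBs"
proof -
  have U: "\<Union>(set KBs) = II" using kbb_L by (auto simp: KBs_def)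
  have R: "II - \<Union>(set (take k KBs)) = {x\<in>II. k \<le> kbb x}" if kL: "k < Bst 0" for k
  proof -
    have "\<Union>(set (take k KBs)) = {x\<in>II. kbb x < k}"
      unfolding KBs_def by (rule union_fiber) (use kbb_L kL in auto)
    then show ?thesis by auto
  qed
  show ?thesis unfolding KB_output_def Let_def
    using U R KB_bin by (auto simp: KBs_def)
qed

lemma OPs_feas: "feasible II ss OPs"
proof -
  have U: "\<Union>(set OPs) = II"
  proof -
    have "x div 32 < Nc 1" if "x \<in> II" for x
      using that fct(3)[of "x mod 32"] unfolding II_def by auto
    then show ?thesis by (auto simp: OPs_def)
  qed
  have bins: "OPs ! t \<noteq> {} \<and> OPs ! t \<subseteq> II \<and> sum ss (OPs ! t) \<le> 1" if t: "t < Nc 1" for t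
  proof -
    have bt: "OPs ! t = {x\<in>II. x div 32 = t}" using t by (simp add: OPs_def)
    have "32 * t + 1 \<in> {x\<in>II. x div 32 = t}" using t unfolding II_def by auto
    then have ne: "OPs ! t \<noteq> {}" using bt by auto
    have inj: "inj_on (\<lambda>x. x mod 32) {x\<in>II. x div 32 = t}"
    proof (rule inj_onI)
      fix x y assume "x \<in> {x\<in>II. x div 32 = t}" "y \<in> {x\<in>II. x div 32 = t}" "x mod 32 = y mod 32"
      then show "x = y" by (metis (mono_tags, lifting) div_mult_mod_eq mem_Collect_eq)
    qed
    have img: "(\<lambda>x. x mod 32) ` {x\<in>II. x div 32 = t} \<subseteq> {1..18}" unfolding II_def by auto
    have "(\<Sum>x\<in>{x\<in>II. x div 32 = t}. gg (x mod 32)) = (\<Sum>c\<in>(\<lambda>x. x mod 32) ` {x\<in>II. x div 32 = t}. gg c)"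
      by (simp add: sum.reindex[OF inj])
    also have "\<dots> \<le> (\<Sum>c\<in>{1..18}. gg c)" by (rule sum_mono2[OF _ img]) auto
    also have "\<dots> = 524286" unfolding S18 by (simp add: gg_def)
    finally have "real (\<Sum>x\<in>{x\<in>II. x div 32 = t}. gg (x mod 32)) \<le> 524286" by linarith
    then have "sum ss (OPs ! t) \<le> 1" unfolding bt ss_sum by simp
    then show ?thesis using ne bt by auto
  qed
  have dis: "OPs ! j \<inter> OPs ! k = {}" if "j < Nc 1" "k < Nc 1" "j \<noteq> k" for j k
    using that by (auto simp: OPs_def)
  show ?thesis unfolding feasible_def using U bins dis by (auto simp: OPs_def)
qed

lemma cost_nat: assumes lt: "\<forall>x\<in>A. f x < L" and fin: "finite A" shows
   "cost ss (map (\<lambda>k. {x\<in>A. f x = k}) [0..<L]) = real (\<Sum>x\<in>A. (f x + 1) * gg (x mod 32)) / 524286"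
proof -
  have "cost ss (map (\<lambda>k. {x\<in>A. f x = k}) [0..<L]) = (\<Sum>x\<in>A. real (f x + 1) * ss x)"
    by (rule cost_fiber[OF fin lt])
  also have "\<dots> = (\<Sum>x\<in>A. real ((f x + 1) * gg (x mod 32)) / 524286)"
    by (rule sum.cong) (simp_all add: ss_def algebra_simps)
  also have "\<dots> = real (\<Sum>x\<in>A. (f x + 1) * gg (x mod 32)) / 524286"
    by (simp only: sum_divide_distrib[symmetric] of_nat_sum)
  finally show ?thesis .
qed

lemma cost_KB: "cost ss KBs = 733943509150007224 / 524286"
proof -
  have "cost ss KBs = real (\<Sum>x\<in>II. (kbb x + 1) * gg (x mod 32)) / 524286"
    unfolding KBs_def by (rule cost_nat) (use kbb_L II_fin in auto)
  also have "\<dots> = real (733943509150007224::nat) / 524286" by (simp only: kb_nat)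
  finally show ?thesis by simp
qed

lemma cost_OP: "cost ss OPs = 512013762924028466 / 524286"
proof -
  have "\<forall>x\<in>II. x div 32 < Nc 1" using fct(3) unfolding II_def by fastforce
  then have "cost ss OPs = real (\<Sum>x\<in>II. (x div 32 + 1) * gg (x mod 32)) / 524286"
    unfolding OPs_def by (rule cost_nat[OF _ II_fin])
  also have "\<dots> = real (512013762924028466::nat) / 524286" by (simp only: op_nat)
  finally show ?thesis by simp
qed

lemma OPT_le: "OPT II ss ss \<le> cost ss OPs"
  unfolding OPT_def
proof (rule cInf_lower)
  show "cost ss OPs \<in> {cost ss Bs |Bs. feasible II ss Bs}" using OPs_feas by blast
  show "bdd_below {cost ss Bs |Bs. feasible II ss Bs}"
  proof (rule bdd_belowI[of _ 0])
    fix c assume "c \<in> {cost ss Bs |Bs. feasible II ss Bs}"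
    then obtain Bs where "c = cost ss Bs" by blast
    then show "0 \<le> c" unfolding cost_def by (auto intro!: sum_nonneg mult_nonneg_nonneg simp: ss_nonneg)
  qed
qed

theorem proposition3:
  shows "\<exists>(I :: nat set) (s :: nat \<Rightarrow> real) (w :: nat \<Rightarrow> real) (Bs :: nat set list).
           mwsbp_instance I s w \<and> (\<forall>i\<in>I. w i = s i) \<and>
           KB_output I s w Bs \<and> cost w Bs > 1.4334 * OPT I s w"
proof (intro exI conjI)
  show "mwsbp_instance II ss ss"
    unfolding mwsbp_instance_def
  proof (intro conjI ballI)
    show "finite II" by (rule II_fin)
  next
    fix x assume "x \<in> II"
    then have "1 \<le> x mod 32" unfolding II_def by auto
    then have "0 < gg (x mod 32)" "gg (x mod 32) \<le> 524286" using gg_bound by auto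
    then show "0 < ss x" "ss x \<le> 1" "0 < ss x" unfolding ss_def by auto
  qed
  show "\<forall>i\<in>II. ss i = ss i" by simp
  show "KB_output II ss ss KBs" by (rule KB_ok)
  have "1.4334 * OPT II ss ss \<le> 1.4334 * cost ss OPs" using OPT_le by simp
  also have "\<dots> < cost ss KBs" unfolding cost_KB cost_OP by simp
  finally show "1.4334 * OPT II ss ss < cost ss KBs" .
qed

end
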